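(* Let $n\geq 2$. For $k\in\mathbb{N}$ let $\mathbb{D}_k:=\{2^{-j}:0\leq j\leq k\}$, $\alpha_k:=2^{-nk}$, and $$\mathscr{R}_k:=\Big\{[0,s_1]\times\cdots\times[0,s_{n-1}]\times\Big[0,\frac{\alpha_k}{s_1\cdots s_{n-1}}\Big] : s_1,\dots,s_{n-1}\in\mathbb{D}_k\Big\},$$ and $\mathscr{R}:=\bigcup_{k\in\mathbb{N}}\mathscr{R}_k$. Then for every Orlicz function $\Phi$ with $\Phi=o(\Phi_{n-1})$ at $\infty$, the maximal operator $M_{\mathscr{R}}$ does not satisfy a weak $L^\Phi$ inequality.
   Context: For a family $\mathscr{R}$ of standard rectangles and measurable $f$, $M_{\mathscr{R}}f(x):=\sup\{\frac{1}{|R|}\int_{\tau(R)}|f| : R\in\mathscr{R},\ \tau \text{ a translation},\ x\in\tau(R)\}$, with $|\cdot|$ Lebesgue measure. An Orlicz function is a convex increasing $\Phi:[0,\infty)\to[0,\infty)$ with $\Phi(0)=0$; $L^\Phi(\mathbb{R}^n)$ is the set of measurable $f$ with $\Phi(|f|)\in L^1$. $M_{\mathscr{R}}$ satisfies a weak $L^\Phi$ inequality if there is $C>0$ such that $|\{M_{\mathscr{R}}f>\lambda\}|\leq\int_{\mathbb{R}^n}\Phi(C|f|/\lambda)$ for all $\lambda>0$ and all $f\in L^\Phi(\mathbb{R}^n)$. For $d>0$, $\Phi_d(t):=t(1+\log_+^d t)$, where $\log_+t=\max(\log t,0)$. *)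

theory Defs
  imports "HOL-Analysis.Analysis" "HOL-Library.Landau_Symbols"
begin

text \<open>Euclidean n-space is modelled as real ^ ('m option): the coordinates Some i
  (i :: 'm) are the first n-1 coordinates, None is the last one, and
  n = CARD('m option) = CARD('m) + 1 \<ge> 2 automatically.\<close>

definition dyadD :: "nat \<Rightarrow> real set" where
  "dyadD k = {(1/2) ^ j | j. j \<le> k}"

definition alphak :: "nat \<Rightarrow> nat \<Rightarrow> real" where
  "alphak n k = (1/2) ^ (n * k)"

definition rectk :: "nat \<Rightarrow> ('m::finite \<Rightarrow> real) \<Rightarrow> (real ^ ('m option)) set" where
  "rectk k s = {x. (\<forall>i. 0 \<le> x $ Some i \<and> x $ Some i \<le> s i) \<and>
                  0 \<le> x $ None \<and> x $ None \<le> alphak CARD('m option) k / (\<Prod>i\<in>UNIV. s i)}"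

definition RFam_k :: "nat \<Rightarrow> (real ^ ('m::finite option)) set set" where
  "RFam_k k = {rectk k s | s. \<forall>i. s i \<in> dyadD k}"

definition RFam :: "(real ^ ('m::finite option)) set set" where
  "RFam = (\<Union>k. RFam_k k)"

definition maxop :: "('a::euclidean_space) set set \<Rightarrow> ('a \<Rightarrow> real) \<Rightarrow> 'a \<Rightarrow> ennreal" where
  "maxop \<R> f x = (SUP (R, a) \<in> {(R, a). R \<in> \<R> \<and> x \<in> (\<lambda>y. a + y) ` R}.
      (\<integral>\<^sup>+ y \<in> (\<lambda>y. a + y) ` R. ennreal \<bar>f y\<bar> \<partial>lebesgue) / emeasure lebesgue R)"

definition orlicz :: "(real \<Rightarrow> real) \<Rightarrow> bool" where
  "orlicz \<Phi> \<longleftrightarrow> convex_on {0..} \<Phi> \<and> mono_on {0..} \<Phi> \<and> \<Phi> 0 = 0 \<and> (\<forall>t\<ge>0. \<Phi> t \<ge> 0)"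

definition LPhi :: "(real \<Rightarrow> real) \<Rightarrow> ('a::euclidean_space \<Rightarrow> real) set" where
  "LPhi \<Phi> = {f. f \<in> borel_measurable lebesgue \<and> integrable lebesgue (\<lambda>x. \<Phi> \<bar>f x\<bar>)}"

definition weak_LPhi :: "('a::euclidean_space) set set \<Rightarrow> (real \<Rightarrow> real) \<Rightarrow> bool" where
  "weak_LPhi \<R> \<Phi> \<longleftrightarrow> (\<exists>C>0. \<forall>lam>0. \<forall>f \<in> LPhi \<Phi>.
      emeasure lebesgue {x. maxop \<R> f x > ennreal lam}
        \<le> (\<integral>\<^sup>+ x. ennreal (\<Phi> (C * \<bar>f x\<bar> / lam)) \<partial>lebesgue))"

definition PhiD :: "real \<Rightarrow> real \<Rightarrow> real" where
  "PhiD d t = t * (1 + (max (ln t) 0) powr d)"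

end

theory Submission
  imports Defs
begin


lemma em_cbox: "emeasure lebesgue (cbox a (b::'a::euclidean_space)) = ennreal (measure lborel (cbox a b))"
  by (simp add: emeasure_eq_measure2)

lemma meas_cbox_cart: "measure lborel (cbox l (u::real^'n)) = (\<Prod>i\<in>UNIV. max 0 (u$i - l$i))"
proof (cases "cbox l u = {}")
  case True
  then obtain i where "u$i < l$i" using interval_eq_empty_cart(2) by blast
  then have "max 0 (u$i - l$i) = 0" by simp
  then have "(\<Prod>i\<in>UNIV. max 0 (u$i - l$i)) = 0" by (meson UNIV_I finite prod_zero)
  with True show ?thesis by simp
next
  case False
  then have "\<forall>i. l$i \<le> u$i" using interval_ne_empty_cart(1) by blast
  have "measure lborel (cbox l u) = (\<Prod>i\<in>UNIV. u$i - l$i)" by (rule content_cbox_cart[OF False])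
  also have "\<dots> = (\<Prod>i\<in>UNIV. max 0 (u$i - l$i))"
    using \<open>\<forall>i. l$i \<le> u$i\<close> by (intro prod.cong refl) (simp add: max_def)
  finally show ?thesis .
qed

lemma prod_option: "(\<Prod>i\<in>(UNIV::'m::finite option set). g i) = g None * (\<Prod>j\<in>UNIV. g (Some j))"
proof -
  have "prod g (insert None (range Some)) = g None * prod g (range Some)"
    by (rule prod.insert) auto
  also have "prod g (range Some) = (\<Prod>j\<in>UNIV. g (Some j))"
    by (simp add: prod.reindex)
  finally show ?thesis by (simp only: UNIV_option_conv[symmetric])
qed

lemma avg_formula:
  fixes r q a :: "real^'n"
  shows "(\<integral>\<^sup>+ y \<in> (\<lambda>y. a + y) ` cbox 0 r. ennreal \<bar>indicator (cbox 0 q) y\<bar> \<partial>lebesgue)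
     = ennreal (\<Prod>i\<in>UNIV. max 0 (min (a$i + r$i) (q$i) - max (a$i) 0))"
proof -
  have tr: "(\<lambda>y. a + y) ` cbox 0 r = cbox a (a + r)"
    using cbox_translation[of a 0 r] by simp
  have "(\<integral>\<^sup>+ y \<in> (\<lambda>y. a + y) ` cbox 0 r. ennreal \<bar>indicator (cbox 0 q) y\<bar> \<partial>lebesgue)
      = (\<integral>\<^sup>+ y. indicator (cbox a (a + r) \<inter> cbox 0 q) y \<partial>lebesgue)"
    unfolding tr by (intro nn_integral_cong) (auto split: split_indicator)
  also have "\<dots> = emeasure lebesgue (cbox a (a + r) \<inter> cbox 0 q)"
    by (intro nn_integral_indicator) auto
  also have "cbox a (a + r) \<inter> cbox 0 q = cbox (\<chi> i. max (a$i) (0$i)) (\<chi> i. min ((a+r)$i) (q$i))"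
    unfolding Int_interval_cart interval_cbox_cart ..
  also have "emeasure lebesgue \<dots> = ennreal (\<Prod>i\<in>UNIV. max 0 (min (a$i + r$i) (q$i) - max (a$i) 0))"
    unfolding em_cbox meas_cbox_cart by simp
  finally show ?thesis .
qed

lemma em_cbox0: 
  fixes r :: "real^'n"
  assumes "\<forall>i. 0 < r$i"
  shows "emeasure lebesgue (cbox 0 r) = ennreal (\<Prod>i\<in>UNIV. r$i)"
proof -
  have "(\<Prod>i\<in>UNIV. max 0 (r$i - 0$i)) = (\<Prod>i\<in>UNIV. r$i)"
    using assms by (intro prod.cong refl) (simp add: less_imp_le)
  then show ?thesis unfolding em_cbox meas_cbox_cart by simp
qed

lemma level_eq:
  "{x. ennreal lam < maxop F f x} = (\<Union>R\<in>F. \<Union>y\<in>R. (\<lambda>a. a + y) ` {a. ennreal lam < (\<integral>\<^sup>+ y \<in> (\<lambda>y. a + y) ` R. ennreal \<bar>f y\<bar> \<partial>lebesgue) / emeasure lebesgue R})"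
  (is "?L = ?R")
proof
  show "?L \<subseteq> ?R"
  proof
    fix x assume "x \<in> ?L"
    then obtain R a where "R \<in> F" "x \<in> (\<lambda>y. a + y) ` R"
      "ennreal lam < (\<integral>\<^sup>+ y \<in> (\<lambda>y. a + y) ` R. ennreal \<bar>f y\<bar> \<partial>lebesgue) / emeasure lebesgue R"
      unfolding maxop_def less_SUP_iff mem_Collect_eq by (auto simp only: split_beta' case_prod_beta prod.collapse)
    then obtain y where y: "y \<in> R" "x = a + y" by blast
    have "a \<in> {a. ennreal lam < (\<integral>\<^sup>+ y \<in> (\<lambda>y. a + y) ` R. ennreal \<bar>f y\<bar> \<partial>lebesgue) / emeasure lebesgue R}"
      using \<open>ennreal lam < _\<close> by (simp only: mem_Collect_eq)
    then have "x \<in> (\<lambda>a. a + y) ` {a. ennreal lam < (\<integral>\<^sup>+ y \<in> (\<lambda>y. a + y) ` R. ennreal \<bar>f y\<bar> \<partial>lebesgue) / emeasure lebesgue R}"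
      using y(2) by (rule rev_image_eqI)
    then show "x \<in> ?R" using \<open>R \<in> F\<close> y(1) by blast
  qed
next
  show "?R \<subseteq> ?L"
  proof
    fix x assume "x \<in> ?R"
    then obtain R a y where "R \<in> F" "y \<in> R" "x = a + y"
      "ennreal lam < (\<integral>\<^sup>+ y \<in> (\<lambda>y. a + y) ` R. ennreal \<bar>f y\<bar> \<partial>lebesgue) / emeasure lebesgue R"
      by blast
    then have mem: "(R, a) \<in> {(R, a). R \<in> F \<and> x \<in> (\<lambda>y. a + y) ` R}" by blast
    show "x \<in> ?L" unfolding maxop_def less_SUP_iff mem_Collect_eq
      by (rule bexI[OF _ mem]) (simp only: prod.case \<open>ennreal lam < _\<close>)
  qed
qed
lemma open_level:
  fixes F :: "(real^'n) set set"
  assumes F: "\<forall>R\<in>F. \<exists>r. (\<forall>i. 0 < r$i) \<and> R = cbox 0 r" and lam: "0 \<le> lam"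
  shows "open {x. ennreal lam < maxop F (indicator (cbox 0 q)) x}"
proof -
  define G where "G R = {a. ennreal lam < (\<integral>\<^sup>+ y \<in> (\<lambda>y. a + y) ` R. ennreal \<bar>indicator (cbox 0 q) y\<bar> \<partial>lebesgue) / emeasure lebesgue R}" for R
  have "open (G R)" if "R \<in> F" for R
  proof -
    obtain r where r: "\<forall>i. 0 < r$i" "R = cbox 0 r" using F \<open>R \<in> F\<close> by blast
    have P: "0 < (\<Prod>i\<in>UNIV. r$i)" using r(1) by (simp add: prod_pos)
    have "G R = {a. lam < (\<Prod>i\<in>UNIV. max 0 (min (a$i + r$i) (q$i) - max (a$i) 0)) / (\<Prod>i\<in>UNIV. r$i)}"
      unfolding G_def r(2) avg_formula em_cbox0[OF r(1)]
      using P lam by (simp add: divide_ennreal prod_nonneg ennreal_less_iff)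
    also have "open \<dots>"
      using P by (intro open_Collect_less continuous_intros) (simp only: ball_UNIV less_numeral_extra(3) order_less_imp_not_eq2 not_False_eq_True simp_thms)
    finally show ?thesis .
  qed
  moreover have "(\<lambda>a. a + y) ` S = (\<lambda>a. y + a) ` S" for y :: "real^'n" and S
    by (simp only: add.commute)
  ultimately show ?thesis unfolding level_eq G_def[symmetric]
    by (metis (no_types, lifting) open_UN open_translation)
qed


lemma all_option: "(\<forall>i::'a option. P i) \<longleftrightarrow> P None \<and> (\<forall>j. P (Some j))"
  by (metis option.exhaust)

definition vr :: "nat \<Rightarrow> ('m::finite \<Rightarrow> real) \<Rightarrow> real^('m option)" where
  "vr k s = (\<chi> i. case i of Some j \<Rightarrow> s j | None \<Rightarrow> alphak CARD('m option) k / prod s UNIV)"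

lemma fixes s :: "'m::finite \<Rightarrow> real" shows vr_Some[simp]: "vr k s $ Some j = s j" and vr_None[simp]: "vr k s $ None = alphak CARD('m option) k / prod s UNIV"
  by (simp_all add: vr_def)

lemma rect_cbox: "rectk k s = cbox 0 (vr k s)"
  unfolding rectk_def
  by (rule set_eqI) (simp add: mem_box_cart all_option conj_commute)

lemma dyad_bounds: assumes "x \<in> dyadD k" shows "(1/2)^k \<le> x" "x \<le> 1" "0 < x"
proof -
  obtain j where j: "x = (1/2)^j" "j \<le> k" using assms unfolding dyadD_def by blast
  show "(1/2)^k \<le> x" using j by (simp add: power_decreasing)
  show "x \<le> 1" using j by (simp add: power_le_one)
  show "0 < x" using j by simp
qed

lemma alphak_pos: "0 < alphak n k" by (simp add: alphak_def)

lemma RFam_cbox: "\<forall>R\<in>(RFam :: (real ^ ('m::finite option)) set set). \<exists>r. (\<forall>i. 0 < r$i) \<and> R = cbox 0 r"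
proof
  fix R :: "(real ^ ('m option)) set" assume "R \<in> RFam"
  then obtain k s where ks: "\<forall>i. s i \<in> dyadD k" "R = rectk k s"
    unfolding RFam_def RFam_k_def by blast
  have sp: "\<forall>i. 0 < s i" using ks(1) dyad_bounds(3) by blast
  then have "0 < prod s UNIV" by (simp add: prod_pos)
  then have "\<forall>i. 0 < vr k s $ i" using sp alphak_pos by (simp add: all_option)
  then show "\<exists>r. (\<forall>i. 0 < r$i) \<and> R = cbox 0 r" using ks(2) rect_cbox by blast
qed


theorem mainTheorem4:
  fixes \<Phi> :: "real \<Rightarrow> real"
  assumes "orlicz \<Phi>"
    and "\<Phi> \<in> o[at_top](PhiD (real (CARD('m::finite option)) - 1))"
  shows "\<not> weak_LPhi (RFam :: (real ^ ('m option)) set set) \<Phi>"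
proof
  assume W: "weak_LPhi (RFam :: (real ^ ('m option)) set set) \<Phi>"
  have Phi0: "\<Phi> 0 = 0" and Phinn: "\<And>t. t \<ge> 0 \<Longrightarrow> \<Phi> t \<ge> 0" using assms(1) unfolding orlicz_def by auto
  define d where "d = CARD('m)"
  define n where "n = CARD('m option)"
  have hn: "n = Suc d" unfolding n_def d_def by simp
  have d1: "d \<ge> 1" unfolding d_def by (simp add: Suc_leI)
  obtain C where C: "C > 0" and CW: "\<forall>lam>0. \<forall>f\<in>LPhi \<Phi>.
      emeasure lebesgue {x. maxop (RFam :: (real ^ ('m option)) set set) f x > ennreal lam}
        \<le> (\<integral>\<^sup>+ x. ennreal (\<Phi> (C * \<bar>f x\<bar> / lam)) \<partial>lebesgue)"
    using W unfolding weak_LPhi_def by blast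
  define A where "A = \<bar>ln (2*C)\<bar> + real (n*d)"
  have A0: "A \<ge> 0" unfolding A_def by simp
  define \<epsilon> where "\<epsilon> = 1/(8*4^d*C*(1+A^d))"
  have A1: "0 < 1 + A^d" using A0 by (simp add: add_pos_nonneg)
  have \<epsilon>: "\<epsilon> > 0" unfolding \<epsilon>_def using C A1 by simp
  from landau_o.smallD[OF assms(2) \<epsilon>] obtain T0 where
    T0: "\<And>t. t \<ge> T0 \<Longrightarrow> norm (\<Phi> t) \<le> \<epsilon> * norm (PhiD (real n - 1) t)"
    unfolding eventually_at_top_linorder n_def by blast
  obtain k :: nat where k: "max T0 1 / (2*C) \<le> real k" using real_arch_simple by blast
  define \<alpha> where "\<alpha> = alphak n k"
  have \<alpha>: "\<alpha> = (1/2)^(n*k)" unfolding \<alpha>_def alphak_def ..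
  have \<alpha>0: "0 < \<alpha>" unfolding \<alpha> by simp
  have \<alpha>1: "\<alpha> \<le> 1" unfolding \<alpha> by (simp add: power_le_one)
  define T where "T = 2*C / \<alpha>^d"
  have Tdef2: "T = 2*C * 2^(n*k*d)"
    unfolding T_def \<alpha> by (simp add: power_mult[symmetric] power_one_over)
  have nd: "1 \<le> n*d" using hn d1 by simp
  have knd: "k \<le> n*k*d" using mult_le_mono2[OF nd, of k] by (simp add: algebra_simps)
  have "real k \<le> 2^k" using less_exp[of k] by (metis less_imp_le of_nat_le_iff of_nat_numeral of_nat_power)
  also have "(2::real)^k \<le> 2^(n*k*d)" using knd by (intro power_increasing) auto
  finally have Tk: "2*C*real k \<le> T" unfolding Tdef2 using C by simp
  have "max T0 1 \<le> 2*C*real k" using k C by (simp add: field_simps)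
  then have TT0: "T \<ge> T0" and T1: "T \<ge> 1" using Tk by auto
  define q :: "real^('m option)" where "q = (\<chi> i. \<alpha>)"
  define Q where "Q = cbox 0 q"
  define f :: "real^('m option) \<Rightarrow> real" where "f = indicator Q"
  define lam where "lam = \<alpha>^d/2"
  have lam0: "lam > 0" unfolding lam_def using \<alpha>0 by simp
  define L where "L = {x. maxop (RFam :: (real ^ ('m option)) set set) f x > ennreal lam}"
  have Qm: "Q \<in> sets lebesgue" unfolding Q_def by simp
  have "(\<lambda>x. \<Phi> \<bar>f x\<bar>) = (\<lambda>x. \<Phi> 1 * indicator Q x)"
    unfolding f_def by (auto simp: Phi0 split: split_indicator)
  moreover have "integrable lebesgue (\<lambda>x. \<Phi> 1 * indicator Q x)"
    unfolding Q_def by (intro integrable_mult_right integrable_indicator_iff[THEN iffD2]) (use emeasure_lborel_cbox_finite[of 0 q] in \<open>auto simp: infinity_ennreal_def\<close>)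
  ultimately have fL: "f \<in> LPhi \<Phi>" unfolding LPhi_def f_def using Qm by auto
  have Lmeas: "L \<in> sets lebesgue"
  proof -
    have "open L" unfolding L_def f_def Q_def using RFam_cbox lam0 by (intro open_level) auto
    then show ?thesis by auto
  qed
  define s :: "('m \<Rightarrow> nat) \<Rightarrow> 'm \<Rightarrow> real" where "s j m = (1/2)^(j m)" for j m
  define J where "J = PiE (UNIV :: 'm set) (\<lambda>_. {..k})"
  define P where "P j = cbox (\<chi> i. case i of Some m \<Rightarrow> 3/4 * s j m | None \<Rightarrow> 0) (vr k (s j))" for j
  have jk: "j m \<le> k" if "j \<in> J" for j m using that unfolding J_def by (auto simp: PiE_iff)
  have kn: "k \<le> n*k" using hn by simp
  have sj: "\<alpha> \<le> s j m" "s j m \<le> 1" "0 < s j m" "s j m \<in> dyadD k" if "j \<in> J" for j m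
  proof -
    show "\<alpha> \<le> s j m" unfolding \<alpha> s_def using le_trans[OF jk[OF that, of m] kn] by (intro power_decreasing) auto
    show "s j m \<le> 1" unfolding s_def by (simp add: power_le_one)
    show "0 < s j m" unfolding s_def by simp
    show "s j m \<in> dyadD k" unfolding s_def dyadD_def using jk[OF that, of m] by blast
  qed
  have ps: "0 < prod (s j) UNIV" "prod (s j) UNIV \<le> 1" if "j \<in> J" for j
  proof -
    show "0 < prod (s j) UNIV" using sj(3)[OF that] by (simp add: prod_pos)
    show "prod (s j) UNIV \<le> 1" using sj(2,3)[OF that] by (intro prod_le_1) (simp add: less_imp_le)
  qed
  have vrN: "vr k (s j) $ None = \<alpha> / prod (s j) UNIV" for j by (simp add: \<alpha>_def n_def)
  have rge: "\<alpha> \<le> vr k (s j) $ i" if "j \<in> J" for j i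
  proof (cases i)
    case None
    have "\<alpha> * prod (s j) UNIV \<le> \<alpha> * 1" using ps[OF that] \<alpha>0 by (intro mult_left_mono) auto
    then show ?thesis unfolding None vrN using ps[OF that] by (simp add: le_divide_eq)
  next
    case (Some m) then show ?thesis using sj[OF that] by simp
  qed
  have rpos: "\<forall>i. 0 < vr k (s j) $ i" if "j \<in> J" for j using rge[OF that] \<alpha>0 by (meson less_le_trans)
  have rprod: "(\<Prod>i\<in>UNIV. vr k (s j) $ i) = \<alpha>" if "j \<in> J" for j
    unfolding prod_option vrN vr_Some using ps[OF that] sj(3)[OF that] by (metis less_irrefl nonzero_eq_divide_eq)
  have PL: "P j \<subseteq> L" if j: "j \<in> J" for j
  proof
    fix x assume xP: "x \<in> P j"
    define r where "r = vr k (s j)"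
    have lo0: "0 \<le> (\<chi> i. case i of Some m \<Rightarrow> 3/4 * s j m | None \<Rightarrow> 0) $ i" for i
      using sj[OF j] by (cases i) (auto simp: less_imp_le)
    have xb: "\<forall>i. (\<chi> i. case i of Some m \<Rightarrow> 3/4 * s j m | None \<Rightarrow> 0) $ i \<le> x$i \<and> x$i \<le> r$i"
      using xP unfolding P_def r_def mem_box_cart by blast
    have xR: "x \<in> cbox 0 r" unfolding mem_box_cart zero_index
    proof
      fix i show "0 \<le> x$i \<and> x$i \<le> r$i" using lo0[of i] xb by (meson order_trans)
    qed
    have Rin: "rectk k (s j) \<in> (RFam :: (real ^ ('m option)) set set)"
      unfolding RFam_def RFam_k_def using sj(4)[OF j] by blast
    have mem: "(rectk k (s j), 0) \<in> {(R, a). R \<in> (RFam :: (real ^ ('m option)) set set) \<and> x \<in> (\<lambda>y. a + y) ` R}"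
      using Rin xR unfolding rect_cbox r_def by simp
    have h: "(\<Prod>i\<in>UNIV. max 0 (min (0$i + r$i) (q$i) - max (0$i) 0)) = \<alpha>^n"
    proof -
      have "(\<Prod>i\<in>UNIV. max 0 (min (0$i + r$i) (q$i) - max (0$i) 0)) = (\<Prod>i\<in>(UNIV::'m option set). \<alpha>)"
        using rge[OF j] \<alpha>0 unfolding r_def q_def by (intro prod.cong refl) (simp add: min_absorb2 max_absorb2 less_imp_le)
      then show ?thesis by (simp add: n_def)
    qed
    have val: "(\<integral>\<^sup>+ y \<in> (\<lambda>y. 0 + y) ` rectk k (s j). ennreal \<bar>f y\<bar> \<partial>lebesgue) / emeasure lebesgue (rectk k (s j)) = ennreal (\<alpha>^d)"
    proof -
      have "(\<integral>\<^sup>+ y \<in> (\<lambda>y. 0 + y) ` rectk k (s j). ennreal \<bar>f y\<bar> \<partial>lebesgue) / emeasure lebesgue (rectk k (s j))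
          = ennreal (\<alpha>^n) / ennreal \<alpha>"
        unfolding rect_cbox f_def Q_def avg_formula em_cbox0[OF rpos[OF j]] rprod[OF j]
        using h unfolding r_def by simp
      also have "\<dots> = ennreal (\<alpha>^n / \<alpha>)" using \<alpha>0 by (simp add: divide_ennreal)
      also have "\<alpha>^n / \<alpha> = \<alpha>^d" using \<alpha>0 hn by simp
      finally show ?thesis .
    qed
    have "lam < \<alpha>^d" unfolding lam_def using \<alpha>0 by simp
    then have "ennreal lam < ennreal (\<alpha>^d)" using lam0 by (simp add: ennreal_less_iff)
    then show "x \<in> L" unfolding L_def maxop_def less_SUP_iff mem_Collect_eq
      by (intro bexI[OF _ mem]) (simp only: prod.case val)
  qed
  have Pm: "emeasure lebesgue (P j) = ennreal (\<alpha> * (1/4)^d)" if j: "j \<in> J" for j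
  proof -
    have "(\<Prod>m\<in>UNIV. max 0 (s j m - 3/4 * s j m)) = (\<Prod>m\<in>UNIV. s j m * (1/4))"
      using sj(3)[OF j] by (intro prod.cong refl) (auto simp: max_def intro: less_imp_le)
    also have "\<dots> = prod (s j) UNIV * (\<Prod>m\<in>(UNIV::'m set). 1/4)" by (rule prod.distrib)
    also have "\<dots> = prod (s j) UNIV * (1/4)^d" by (simp only: prod_constant d_def)
    finally have e: "(\<Prod>m\<in>UNIV. max 0 (s j m - 3/4 * s j m)) = prod (s j) UNIV * (1/4)^d" .
    have "max 0 (\<alpha> / prod (s j) UNIV) = \<alpha> / prod (s j) UNIV" using ps[OF j] \<alpha>0 by simp
    then show ?thesis unfolding P_def em_cbox meas_cbox_cart prod_option vrN
      using e ps[OF j] sj(3)[OF j] by (auto simp: less_irrefl) (metis less_irrefl)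
  qed
  have aux: "P j \<inter> P j' = {}" if "j m < j' m" for j j' m
  proof (rule ccontr)
    assume "P j \<inter> P j' \<noteq> {}"
    then obtain x where x: "x \<in> P j" "x \<in> P j'" by blast
    have 1: "3/4 * s j m \<le> x $ Some m" using x(1) unfolding P_def mem_box_cart by (metis option.simps(5) vec_lambda_beta)
    have 2: "x $ Some m \<le> s j' m" using x(2) unfolding P_def mem_box_cart by (metis vr_Some)
    have "s j' m \<le> (1/2)^(Suc (j m))" unfolding s_def using that by (intro power_decreasing) auto
    also have "\<dots> = s j m / 2" unfolding s_def by simp
    also have "\<dots> < 3/4 * s j m" unfolding s_def by simp
    finally show False using 1 2 by simp
  qed
  have Pdisj: "disjoint_family_on P J"
    unfolding disjoint_family_on_def
  proof (intro ballI impI)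
    fix j j' assume "j \<in> J" "j' \<in> J" "j \<noteq> j'"
    then obtain m where "j m \<noteq> j' m" by (meson ext)
    then show "P j \<inter> P j' = {}" using aux[of j m j'] aux[of j' m j] by (metis Int_commute linorder_neqE_nat)
  qed
  have cardJ: "card J = (k+1)^d" unfolding J_def d_def by (simp add: card_PiE)
  have "ennreal (real ((k+1)^d) * (\<alpha> * (1/4)^d)) = (\<Sum>j\<in>J. emeasure lebesgue (P j))"
    using Pm cardJ by (simp add: ennreal_mult' ennreal_of_nat_eq_real_of_nat)
  also have "\<dots> = emeasure lebesgue (\<Union>j\<in>J. P j)"
  proof (rule sum_emeasure)
    show "P ` J \<subseteq> sets lebesgue" unfolding P_def by auto
    show "disjoint_family_on P J" by (rule Pdisj)
    show "finite J" unfolding J_def by (simp add: finite_PiE)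
  qed
  also have "\<dots> \<le> emeasure lebesgue L"
    using PL Lmeas by (intro emeasure_mono) auto
  also have "\<dots> \<le> (\<integral>\<^sup>+ x. ennreal (\<Phi> (C * \<bar>f x\<bar> / lam)) \<partial>lebesgue)"
    using CW lam0 fL unfolding L_def by blast
  also have "\<dots> = ennreal (\<Phi> T * \<alpha>^n)"
  proof -
    have CT: "C / lam = T" unfolding lam_def T_def by simp
    have "(\<lambda>x. ennreal (\<Phi> (C * \<bar>f x\<bar> / lam))) = (\<lambda>x. ennreal (\<Phi> T) * indicator Q x)"
      unfolding f_def by (auto simp: Phi0 CT split: split_indicator)
    then have "(\<integral>\<^sup>+ x. ennreal (\<Phi> (C * \<bar>f x\<bar> / lam)) \<partial>lebesgue) = ennreal (\<Phi> T) * emeasure lebesgue Q"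
      using nn_integral_cmult_indicator[OF Qm] by simp
    also have "emeasure lebesgue Q = ennreal (\<alpha>^n)"
    proof -
      have "(\<Prod>i\<in>UNIV. max 0 (q$i - 0$i)) = (\<Prod>i\<in>(UNIV::'m option set). \<alpha>)"
        unfolding q_def using \<alpha>0 by simp
      then show ?thesis unfolding Q_def em_cbox meas_cbox_cart by (simp add: n_def)
    qed
    also have "ennreal (\<Phi> T) * ennreal (\<alpha>^n) = ennreal (\<Phi> T * \<alpha>^n)"
      using Phinn T1 \<alpha>0 by (simp add: ennreal_mult)
    finally show ?thesis .
  qed
  finally have "ennreal (real ((k+1)^d) * (\<alpha> * (1/4)^d)) \<le> ennreal (\<Phi> T * \<alpha>^n)" .
  moreover have "\<Phi> T * \<alpha>^n < real ((k+1)^d) * (\<alpha> * (1/4)^d)"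
  proof -
    define K where "K = real ((k+1)^d)"
    have K1: "K \<ge> 1" unfolding K_def by simp
    have lnT0: "0 \<le> ln T" using T1 by simp
    have "ln T = ln (2*C) + real (n*k*d) * ln 2" unfolding Tdef2 using C by (simp add: ln_mult ln_realpow)
    also have "\<dots> \<le> \<bar>ln (2*C)\<bar> + real (n*k*d)"
      using ln_2_less_1 by (intro add_mono) (auto intro: mult_left_le)
    also have "\<dots> \<le> A * (real k + 1)"
    proof -
      have "\<bar>ln (2*C)\<bar> \<le> \<bar>ln (2*C)\<bar> * (real k + 1)" by (simp add: mult_le_cancel_left1)
      moreover have "real (n*k*d) \<le> real (n*d) * (real k + 1)" by (simp add: algebra_simps)
      ultimately show ?thesis unfolding A_def by (simp add: algebra_simps)
    qed
    finally have lnT: "ln T \<le> A * (real k + 1)" .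
    have pw: "(max (ln T) 0) powr (real n - 1) \<le> (A * (real k + 1))^d"
    proof (cases "ln T = 0")
      case True then show ?thesis using A0 by simp
    next
      case False
      then have "0 < ln T" using lnT0 by simp
      then have "(max (ln T) 0) powr (real n - 1) = ln T ^ d" using hn by (simp add: powr_realpow)
      also have "\<dots> \<le> (A * (real k + 1))^d" using lnT lnT0 by (intro power_mono) auto
      finally show ?thesis .
    qed
    have PD: "PhiD (real n - 1) T = T * (1 + (max (ln T) 0) powr (real n - 1))" unfolding PhiD_def ..
    have PD0: "0 \<le> PhiD (real n - 1) T" unfolding PD using T1 by simp
    have "\<Phi> T \<le> \<epsilon> * PhiD (real n - 1) T" using T0[OF TT0] PD0 by simp
    also have "\<dots> \<le> \<epsilon> * (T * (1 + (A * (real k + 1))^d))"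
      unfolding PD using pw \<epsilon> T1 by (intro mult_left_mono) auto
    also have "(A * (real k + 1))^d = A^d * K" unfolding K_def by (simp add: power_mult_distrib add.commute)
    also have "\<epsilon> * (T * (1 + A^d * K)) \<le> \<epsilon> * (T * ((1 + A^d) * K))"
    proof -
      have "1 + A^d * K \<le> (1 + A^d) * K" using K1 by (simp add: algebra_simps)
      then show ?thesis using \<epsilon> T1 by (intro mult_left_mono) auto
    qed
    finally have Pb: "\<Phi> T \<le> \<epsilon> * (T * ((1 + A^d) * K))" .
    have "\<Phi> T * \<alpha>^n \<le> \<epsilon> * (T * ((1 + A^d) * K)) * \<alpha>^n"
      using Pb \<alpha>0 by (intro mult_right_mono) auto
    also have "\<dots> = \<epsilon> * (1 + A^d) * K * (T * \<alpha>^n)" by (simp add: algebra_simps)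
    also have "T * \<alpha>^n = 2*C*\<alpha>" unfolding T_def hn using \<alpha>0 by (simp add: field_simps)
    also have "\<epsilon> * (1 + A^d) * K * (2*C*\<alpha>) = K * \<alpha> / (4 * 4^d)"
    proof -
      define B where "B = 1 + A^d"
      have B: "0 < B" using A1 unfolding B_def .
      have "\<epsilon> = 1/(8*4^d*C*B)" unfolding \<epsilon>_def B_def ..
      then show ?thesis unfolding B_def[symmetric] using B C by (simp add: field_simps)
    qed
    also have "\<dots> < K * (\<alpha> * (1/4)^d)"
      using K1 \<alpha>0 by (simp add: field_simps power_one_over)
    finally show ?thesis unfolding K_def .
  qed
  moreover have "0 \<le> \<Phi> T * \<alpha>^n" using Phinn T1 \<alpha>0 by simp
  ultimately show False by (simp add: ennreal_le_iff2 not_le) 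
qed

end
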